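(* Let $(A,\circ)$ be a Novikov algebra and $\{a,b\}=a\circ b+b\circ a$. Then for all $a,b,c,d\in A$, $$\{\{a,b\},\{c,d\}\}-\{\{a,d\},\{c,b\}\}=\{d\circ c,a\circ b\}+\{c\circ d,b\circ a\}-\{b\circ c,a\circ d\}-\{c\circ b,d\circ a\}.$$
   Context: A (right) Novikov algebra is an algebra $(A,\circ)$ satisfying $a\circ(b\circ c)-(a\circ b)\circ c=a\circ(c\circ b)-(a\circ c)\circ b$ and $a\circ(b\circ c)=b\circ(a\circ c)$ for all $a,b,c$. *)

theory Defs
  imports Main
begin

text \<open>An algebra (A, o): underlying abelian group with a biadditive product.
  (Bilinearity over a base field implies biadditivity; scalar multiplication
  plays no role in the identity.)\<close>
definition biadditive :: "('a::ab_group_add \<Rightarrow> 'a \<Rightarrow> 'a) \<Rightarrow> bool" where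
  "biadditive m \<longleftrightarrow>
     (\<forall>a b c. m (a + b) c = m a c + m b c) \<and> (\<forall>a b c. m a (b + c) = m a b + m a c)"

definition novikov :: "('a::ab_group_add \<Rightarrow> 'a \<Rightarrow> 'a) \<Rightarrow> bool" where
  "novikov m \<longleftrightarrow> biadditive m \<and>
     (\<forall>a b c. m a (m b c) - m (m a b) c = m a (m c b) - m (m a c) b) \<and>
     (\<forall>a b c. m a (m b c) = m b (m a c))"

definition anticomm :: "('a::ab_group_add \<Rightarrow> 'a \<Rightarrow> 'a) \<Rightarrow> 'a \<Rightarrow> 'a \<Rightarrow> 'a" where
  "anticomm m a b = m a b + m b a"

end

theory Submission
  imports Defs
begin

lemma nov_facts:
  fixes m :: "'a::ab_group_add \<Rightarrow> 'a \<Rightarrow> 'a"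
  assumes "novikov m"
  shows addL: "\<And>a b c. m (a + b) c = m a c + m b c"
    and addR: "\<And>a b c. m a (b + c) = m a b + m a c"
    and diffL: "\<And>a b c. m (a - b) c = m a c - m b c"
    and diffR: "\<And>a b c. m a (b - c) = m a b - m a c"
    and negR: "\<And>a b. m a (- b) = - m a b"
    and rs: "\<And>a b c. m a (m b c) - m (m a b) c = m a (m c b) - m (m a c) b"
    and lc: "\<And>a b c. m a (m b c) = m b (m a c)"
proof -
  show A: "\<And>a b c. m (a + b) c = m a c + m b c" and B: "\<And>a b c. m a (b + c) = m a b + m a c"
    using assms unfolding novikov_def biadditive_def by auto
  show "\<And>a b c. m (a - b) c = m a c - m b c"
  proof -
    fix a b c
    have "m a c = m ((a - b) + b) c" by simp
    also have "\<dots> = m (a - b) c + m b c" by (rule A)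
    finally show "m (a - b) c = m a c - m b c" by (simp add: algebra_simps)
  qed
  show "\<And>a b c. m a (b - c) = m a b - m a c"
  proof -
    fix a b c
    have "m a b = m a ((b - c) + c)" by simp
    also have "\<dots> = m a (b - c) + m a c" by (rule B)
    finally show "m a (b - c) = m a b - m a c" by (simp add: algebra_simps)
  qed
  show "\<And>a b. m a (- b) = - m a b"
  proof -
    fix a b
    have "m a 0 = m a (0 + 0)" by simp
    hence z: "m a 0 = 0" unfolding B by simp
    have "0 = m a (b + - b)" using z by simp
    thus "m a (- b) = - m a b" unfolding B by (simp add: eq_neg_iff_add_eq_0 add.commute)
  qed
  show "\<And>a b c. m a (m b c) - m (m a b) c = m a (m c b) - m (m a c) b"
   and "\<And>a b c. m a (m b c) = m b (m a c)"
    using assms unfolding novikov_def by auto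
qed

lemma key:
  fixes m :: "'a::ab_group_add \<Rightarrow> 'a \<Rightarrow> 'a"
  assumes N: "novikov m"
  shows "m (m x y) (m z w) - m (m x w) (m z y) = m z (m x (m y w - m w y))"
proof -
  have 1: "m (m x y) (m z w) = m z (m (m x y) w)" using lc[OF N] by metis
  have 2: "m (m x w) (m z y) = m z (m (m x w) y)" using lc[OF N] by metis
  have 3: "m (m x y) w = m x (m y w) - m x (m w y) + m (m x w) y"
    using rs[OF N, of x y w] by (simp add: algebra_simps)
  show ?thesis unfolding 1 2 3
    by (simp add: addR[OF N] diffR[OF N] algebra_simps)
qed

theorem mainTheorem11:
  fixes m :: "'a::ab_group_add \<Rightarrow> 'a \<Rightarrow> 'a"
  assumes "novikov m"
  shows "\<forall>a b c d.
    anticomm m (anticomm m a b) (anticomm m c d) - anticomm m (anticomm m a d) (anticomm m c b)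
    = anticomm m (m d c) (m a b) + anticomm m (m c d) (m b a)
      - anticomm m (m b c) (m a d) - anticomm m (m c b) (m d a)"
proof (intro allI)
  fix a b c d
  note N = assms
  have k1: "m (m a b) (m c d) - m (m a d) (m c b) = m c (m a (m b d - m d b))" by (rule key[OF N])
  have k2: "m (m b a) (m d c) - m (m b c) (m d a) = m d (m b (m a c - m c a))" by (rule key[OF N])
  have k3: "m (m c d) (m a b) - m (m c b) (m a d) = m a (m c (m d b - m b d))" by (rule key[OF N])
  have k4: "m (m d c) (m b a) - m (m d a) (m b c) = m b (m d (m c a - m a c))" by (rule key[OF N])
  have l1: "m c (m a (m b d - m d b)) + m a (m c (m d b - m b d)) = 0"
  proof -
    have "m d b - m b d = - (m b d - m d b)" by simp
    hence "m a (m c (m d b - m b d)) = - m a (m c (m b d - m d b))" by (simp only: negR[OF N])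
    thus ?thesis using lc[OF N, of c a "m b d - m d b"] by simp
  qed
  have l2: "m d (m b (m a c - m c a)) + m b (m d (m c a - m a c)) = 0"
  proof -
    have "m c a - m a c = - (m a c - m c a)" by simp
    hence "m b (m d (m c a - m a c)) = - m b (m d (m a c - m c a))" by (simp only: negR[OF N])
    thus ?thesis using lc[OF N, of d b "m a c - m c a"] by simp
  qed
  show "anticomm m (anticomm m a b) (anticomm m c d) - anticomm m (anticomm m a d) (anticomm m c b)
    = anticomm m (m d c) (m a b) + anticomm m (m c d) (m b a)
      - anticomm m (m b c) (m a d) - anticomm m (m c b) (m d a)"
  proof -
    have e: "m c (m a (m b d - m d b)) + m d (m b (m a c - m c a)) + m a (m c (m d b - m b d)) + m b (m d (m c a - m a c)) = 0"
      using l1 l2 by (metis add.assoc add.commute add.right_neutral)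
    show ?thesis
      unfolding anticomm_def addL[OF N] addR[OF N]
      using e unfolding k1[symmetric] k2[symmetric] k3[symmetric] k4[symmetric]
      by (simp add: algebra_simps)
  qed
qed

end
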